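(* Let $\mathfrak g$ with ideal $\mathfrak p$ be one of the following: (a) for $\ell\in\frac12\mathbb N$, the conformal Galilei algebra $\mathfrak g^{(\ell)}$ with basis $\{e,h,f,p_k: k=0,1,\dots,2\ell\}$ and nonzero brackets $[h,e]=2e$, $[h,f]=-2f$, $[e,f]=h$, $[h,p_k]=2(\ell-k)p_k$, $[e,p_k]=kp_{k-1}$, $[f,p_k]=(2\ell-k)p_{k+1}$, with $\mathfrak p=\mathrm{Span}\{p_k: 0\le k\le 2\ell\}$; or (b) for $n\in\mathbb N$, the $n$-th Schrödinger algebra $\mathfrak{sch}_n$ with basis $\{h,e,f,x_i,y_i,z: 1\le i\le n\}$ and brackets $[h,e]=2e$, $[h,f]=-2f$, $[e,f]=h$, $[h,x_i]=x_i$, $[e,x_i]=0$, $[f,x_i]=y_i$, $[h,y_i]=-y_i$, $[e,y_i]=x_i$, $[f,y_i]=0$, $[x_i,x_j]=[y_i,y_j]=0$, $[x_i,y_j]=\delta_{ij}z$, $z$ central, with $\mathfrak p=\mathrm{Span}\{x_i,y_i,z:1\le i\le n\}$. Let $\phi:\mathfrak p\to\mathbb C$ be a nonzero Lie algebra homomorphism. Then every irreducible quasi-Whittaker $\mathfrak g$-module of type $\phi$ is bland, i.e., is isomorphic to either $W(\phi)$ or $V(\phi')$ for some Lie algebra homomorphism $\phi':\mathfrak g^\phi\to\mathbb C$ extending $\phi$.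
   Context: A Lie algebra homomorphism to $\mathbb C$ is a linear map vanishing on the derived subalgebra. For a $\mathfrak g$-module $V$, $V_\phi=\{v: pv=\phi(p)v\ \forall p\in\mathfrak p\}$; $V$ is a quasi-Whittaker module of type $\phi$ if it is generated by an element of $V_\phi$; an irreducible such $V$ is bland if $\dim V_\phi=1$. $W(\phi)=\mathcal U(\mathfrak g)\otimes_{\mathcal U(\mathfrak p)}\mathbb C w_\phi$ where $pw_\phi=\phi(p)w_\phi$. $\mathfrak g^{\phi}=\{g\in\mathfrak g:\phi([g,p])=0\ \forall p\in\mathfrak p\}$. For an extension $\phi'$ of $\phi$ to $\mathfrak g^\phi$, $V(\phi')=\mathcal U(\mathfrak g)\otimes_{\mathcal U(\mathfrak g^\phi)}\mathbb C v_{\phi'}$ where $yv_{\phi'}=\phi'(y)v_{\phi'}$. *)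

theory Defs
  imports "HOL-Analysis.Analysis"
begin

text \<open>
A finite-dimensional complex Lie algebra is given by a finite basis \<open>B\<close> (a set of
labels in a type \<open>'b\<close>) and structure constants \<open>br a b c\<close> = coefficient of basis
vector \<open>c\<close> in the bracket \<open>[a,b]\<close>.  A module is a complex vector space, i.e. a type
\<open>'v\<close> with scalar multiplication \<open>sm\<close> satisfying the vector space axioms, together with
linear operators \<open>\<rho> b\<close> for the basis elements satisfying the bracket relations
(this is equivalent to a Lie algebra homomorphism \<open>\<frak>g \<rightarrow> \<frak>gl(V)\<close>).
\<close>

definition is_rep ::
  "(complex \<Rightarrow> 'v::ab_group_add \<Rightarrow> 'v) \<Rightarrow> 'b set \<Rightarrow> ('b \<Rightarrow> 'b \<Rightarrow> 'b \<Rightarrow> complex)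
     \<Rightarrow> ('b \<Rightarrow> 'v \<Rightarrow> 'v) \<Rightarrow> bool" where
  "is_rep sm B br \<rho> \<longleftrightarrow>
     vector_space sm \<and>
     (\<forall>b\<in>B. Vector_Spaces.linear sm sm (\<rho> b)) \<and>
     (\<forall>a\<in>B. \<forall>b\<in>B. \<forall>v. \<rho> a (\<rho> b v) - \<rho> b (\<rho> a v) = (\<Sum>c\<in>B. sm (br a b c) (\<rho> c v)))"

definition is_submodule ::
  "(complex \<Rightarrow> 'v::ab_group_add \<Rightarrow> 'v) \<Rightarrow> 'b set \<Rightarrow> ('b \<Rightarrow> 'v \<Rightarrow> 'v) \<Rightarrow> 'v set \<Rightarrow> bool" where
  "is_submodule sm B \<rho> S \<longleftrightarrow> module.subspace sm S \<and> (\<forall>b\<in>B. \<rho> b ` S \<subseteq> S)"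

definition irreducible_mod ::
  "(complex \<Rightarrow> 'v::ab_group_add \<Rightarrow> 'v) \<Rightarrow> 'b set \<Rightarrow> ('b \<Rightarrow> 'v \<Rightarrow> 'v) \<Rightarrow> bool" where
  "irreducible_mod sm B \<rho> \<longleftrightarrow>
     (UNIV :: 'v set) \<noteq> {0} \<and>
     (\<forall>S. is_submodule sm B \<rho> S \<longrightarrow> S = {0} \<or> S = UNIV)"

definition generated_submod ::
  "(complex \<Rightarrow> 'v::ab_group_add \<Rightarrow> 'v) \<Rightarrow> 'b set \<Rightarrow> ('b \<Rightarrow> 'v \<Rightarrow> 'v) \<Rightarrow> 'v \<Rightarrow> 'v set" where
  "generated_submod sm B \<rho> w = \<Inter> {S. is_submodule sm B \<rho> S \<and> w \<in> S}"

text \<open>A linear functional on the ideal \<open>\<frak>p\<close> (spanned by the basis part \<open>Bp\<close>) is given by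
its values on \<open>Bp\<close>; it is a Lie algebra homomorphism iff it vanishes on all brackets of
basis elements of \<open>\<frak>p\<close> (these span \<open>[\<frak>p,\<frak>p]\<close>; since \<open>\<frak>p\<close> is an ideal, the brackets lie in
the span of \<open>Bp\<close>).\<close>
definition lie_hom_on_p :: "'b set \<Rightarrow> ('b \<Rightarrow> 'b \<Rightarrow> 'b \<Rightarrow> complex) \<Rightarrow> ('b \<Rightarrow> complex) \<Rightarrow> bool" where
  "lie_hom_on_p Bp br \<phi> \<longleftrightarrow> (\<forall>a\<in>Bp. \<forall>b\<in>Bp. (\<Sum>c\<in>Bp. br a b c * \<phi> c) = 0)"

definition nonzero_on :: "'b set \<Rightarrow> ('b \<Rightarrow> complex) \<Rightarrow> bool" where
  "nonzero_on Bp \<phi> \<longleftrightarrow> (\<exists>b\<in>Bp. \<phi> b \<noteq> 0)"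

definition whittaker_vecs ::
  "(complex \<Rightarrow> 'v::ab_group_add \<Rightarrow> 'v) \<Rightarrow> 'b set \<Rightarrow> ('b \<Rightarrow> 'v \<Rightarrow> 'v) \<Rightarrow> ('b \<Rightarrow> complex) \<Rightarrow> 'v set" where
  "whittaker_vecs sm Bp \<rho> \<phi> = {v. \<forall>b\<in>Bp. \<rho> b v = sm (\<phi> b) v}"

definition quasi_whittaker ::
  "(complex \<Rightarrow> 'v::ab_group_add \<Rightarrow> 'v) \<Rightarrow> 'b set \<Rightarrow> 'b set \<Rightarrow> ('b \<Rightarrow> 'v \<Rightarrow> 'v) \<Rightarrow> ('b \<Rightarrow> complex) \<Rightarrow> bool" where
  "quasi_whittaker sm B Bp \<rho> \<phi> \<longleftrightarrow>
     (\<exists>w\<in>whittaker_vecs sm Bp \<rho> \<phi>. generated_submod sm B \<rho> w = UNIV)"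

definition bland ::
  "(complex \<Rightarrow> 'v::ab_group_add \<Rightarrow> 'v) \<Rightarrow> 'b set \<Rightarrow> 'b set \<Rightarrow> ('b \<Rightarrow> 'v \<Rightarrow> 'v) \<Rightarrow> ('b \<Rightarrow> complex) \<Rightarrow> bool" where
  "bland sm B Bp \<rho> \<phi> \<longleftrightarrow>
     irreducible_mod sm B \<rho> \<and> vector_space.dim sm (whittaker_vecs sm Bp \<rho> \<phi>) = 1"

definition sc :: "complex \<Rightarrow> 'b \<Rightarrow> 'b \<Rightarrow> complex" where
  "sc k x = (\<lambda>c. if c = x then k else 0)"

section \<open>(a) Conformal Galilei algebra \<open>\<frak>g^{(\<ell>)}\<close>, parametrised by \<open>m = 2\<ell>\<close>\<close>

datatype cga = cE | cH | cF | cP nat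

definition cga_basis :: "nat \<Rightarrow> cga set" where
  "cga_basis m = {cE, cH, cF} \<union> cP ` {0..m}"

definition cga_p :: "nat \<Rightarrow> cga set" where
  "cga_p m = cP ` {0..m}"

fun cga_br :: "nat \<Rightarrow> cga \<Rightarrow> cga \<Rightarrow> cga \<Rightarrow> complex" where
  "cga_br m cH cE = sc 2 cE"
| "cga_br m cE cH = sc (-2) cE"
| "cga_br m cH cF = sc (-2) cF"
| "cga_br m cF cH = sc 2 cF"
| "cga_br m cE cF = sc 1 cH"
| "cga_br m cF cE = sc (-1) cH"
| "cga_br m cH (cP k) = sc (of_nat m - 2 * of_nat k) (cP k)"
| "cga_br m (cP k) cH = sc (2 * of_nat k - of_nat m) (cP k)"
| "cga_br m cE (cP k) = sc (of_nat k) (cP (k - 1))"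
| "cga_br m (cP k) cE = sc (- of_nat k) (cP (k - 1))"
| "cga_br m cF (cP k) = sc (of_nat m - of_nat k) (cP (Suc k))"
| "cga_br m (cP k) cF = sc (of_nat k - of_nat m) (cP (Suc k))"
| "cga_br m _ _ = (\<lambda>_. 0)"

datatype sch = sH | sE | sF | sX nat | sY nat | sZ

definition sch_basis :: "nat \<Rightarrow> sch set" where
  "sch_basis n = {sH, sE, sF, sZ} \<union> sX ` {1..n} \<union> sY ` {1..n}"

definition sch_p :: "nat \<Rightarrow> sch set" where
  "sch_p n = {sZ} \<union> sX ` {1..n} \<union> sY ` {1..n}"

fun sch_br :: "sch \<Rightarrow> sch \<Rightarrow> sch \<Rightarrow> complex" where
  "sch_br sH sE = sc 2 sE"
| "sch_br sE sH = sc (-2) sE"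
| "sch_br sH sF = sc (-2) sF"
| "sch_br sF sH = sc 2 sF"
| "sch_br sE sF = sc 1 sH"
| "sch_br sF sE = sc (-1) sH"
| "sch_br sH (sX i) = sc 1 (sX i)"
| "sch_br (sX i) sH = sc (-1) (sX i)"
| "sch_br sF (sX i) = sc 1 (sY i)"
| "sch_br (sX i) sF = sc (-1) (sY i)"
| "sch_br sH (sY i) = sc (-1) (sY i)"
| "sch_br (sY i) sH = sc 1 (sY i)"
| "sch_br sE (sY i) = sc 1 (sX i)"
| "sch_br (sY i) sE = sc (-1) (sX i)"
| "sch_br (sX i) (sY j) = (if i = j then sc 1 sZ else (\<lambda>_. 0))"
| "sch_br (sY j) (sX i) = (if i = j then sc (-1) sZ else (\<lambda>_. 0))"
| "sch_br _ _ = (\<lambda>_. 0)"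

end

theory Submission
  imports Defs "HOL-Computational_Algebra.Fundamental_Theorem_Algebra"
begin


locale wsetup = vector_space sm for sm :: "complex \<Rightarrow> 'v::ab_group_add \<Rightarrow> 'v" +
  fixes B Bp S :: "'b set" and br :: "'b \<Rightarrow> 'b \<Rightarrow> 'b \<Rightarrow> complex"
    and \<rho> :: "'b \<Rightarrow> 'v \<Rightarrow> 'v" and \<phi> :: "'b \<Rightarrow> complex"
  assumes finB: "finite B"
    and BS: "B = S \<union> Bp" and disj: "S \<inter> Bp = {}"
    and lin: "\<forall>b\<in>B. Vector_Spaces.linear sm sm (\<rho> b)"
    and comm: "\<forall>a\<in>B. \<forall>b\<in>B. \<forall>v. \<rho> a (\<rho> b v) - \<rho> b (\<rho> a v) = (\<Sum>c\<in>B. sm (br a b c) (\<rho> c v))"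
    and ideal: "\<forall>a\<in>B. \<forall>b\<in>Bp. \<forall>c\<in>S. br a b c = 0 \<and> br b a c = 0"
    and sclosed: "\<forall>a\<in>S. \<forall>b\<in>S. \<forall>c\<in>Bp. br a b c = 0"
begin

lemma finS: "finite S" and finBp: "finite Bp" using finB BS by auto

lemma rho_add: "b \<in> B \<Longrightarrow> \<rho> b (x + y) = \<rho> b x + \<rho> b y"
  using lin by (auto simp: Vector_Spaces.linear_iff)
lemma rho_scale: "b \<in> B \<Longrightarrow> \<rho> b (sm c x) = sm c (\<rho> b x)"
  using lin by (auto simp: Vector_Spaces.linear_iff)
lemma rho_0: "b \<in> B \<Longrightarrow> \<rho> b 0 = 0"
  using rho_scale[of b 0 0] by simp
lemma rho_diff: "b \<in> B \<Longrightarrow> \<rho> b (x - y) = \<rho> b x - \<rho> b y"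
  using rho_add[of b "x - y" y] by (simp add: algebra_simps)
lemma rho_sum: "b \<in> B \<Longrightarrow> \<rho> b (sum f A) = (\<Sum>a\<in>A. \<rho> b (f a))"
  by (induction A rule: infinite_finite_induct) (auto simp: rho_0 rho_add)

definition Vphi :: "'v set" where "Vphi = {v. \<forall>b\<in>Bp. \<rho> b v = sm (\<phi> b) v}"
definition Pop :: "('b \<Rightarrow> complex) \<Rightarrow> 'v \<Rightarrow> 'v" where
  "Pop l v = (\<Sum>c\<in>Bp. sm (l c) (\<rho> c v - sm (\<phi> c) v))"
definition Sop :: "('b \<Rightarrow> complex) \<Rightarrow> 'v \<Rightarrow> 'v" where
  "Sop u v = (\<Sum>b\<in>S. sm (u b) (\<rho> b v))"
definition row :: "'b \<Rightarrow> 'b \<Rightarrow> complex" where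
  "row q a = (\<Sum>k\<in>Bp. br q a k * \<phi> k)"
definition cst :: "('b \<Rightarrow> complex) \<Rightarrow> 'b \<Rightarrow> complex" where
  "cst l a = (\<Sum>c\<in>Bp. l c * row c a)"

lemma Sop_add: "Sop u (x + y) = Sop u x + Sop u y"
  unfolding Sop_def using BS by (auto simp: rho_add algebra_simps sum.distrib intro!: sum.cong)
lemma Sop_scale: "Sop u (sm c x) = sm c (Sop u x)"
  unfolding Sop_def using BS by (auto simp: rho_scale scale_sum_right mult.commute intro!: sum.cong)
lemma Sop_0: "Sop u 0 = 0"
  using Sop_scale[of u 0 0] by simp
lemma Sop_diff: "Sop u (x - y) = Sop u x - Sop u y"
  using Sop_add[of u "x - y" y] by (simp add: algebra_simps)
lemma Sop_sum: "Sop u (sum f A) = (\<Sum>a\<in>A. Sop u (f a))"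
  by (induction A rule: infinite_finite_induct) (auto simp: Sop_0 Sop_add)
lemma Sop_lin: "Vector_Spaces.linear sm sm (Sop u)"
  by (simp add: Vector_Spaces.linear_iff Sop_add Sop_scale vector_space_axioms)

lemma Pop_add: "Pop u (x + y) = Pop u x + Pop u y"
  unfolding Pop_def sum.distrib[symmetric] using BS by (intro sum.cong) (auto simp: rho_add algebra_simps)
lemma Pop_scale: "Pop u (sm c x) = sm c (Pop u x)"
  unfolding Pop_def using BS by (auto simp: rho_scale scale_sum_right algebra_simps mult.commute intro!: sum.cong)
lemma Pop_0: "Pop u 0 = 0"
  using Pop_scale[of u 0 0] by simp
lemma Pop_Vphi: "v \<in> Vphi \<Longrightarrow> Pop u v = 0"
  unfolding Pop_def Vphi_def by simp

lemma comm_p: "c \<in> Bp \<Longrightarrow> a \<in> S \<Longrightarrow>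
   \<rho> c (\<rho> a v) = \<rho> a (\<rho> c v) + (\<Sum>k\<in>Bp. sm (br c a k) (\<rho> k v))"
proof -
  assume c: "c \<in> Bp" and a: "a \<in> S"
  have "\<rho> c (\<rho> a v) - \<rho> a (\<rho> c v) = (\<Sum>k\<in>B. sm (br c a k) (\<rho> k v))"
    using comm c a BS by auto
  also have "\<dots> = (\<Sum>k\<in>S. sm (br c a k) (\<rho> k v)) + (\<Sum>k\<in>Bp. sm (br c a k) (\<rho> k v))"
    using BS disj finS finBp by (simp add: sum.union_disjoint)
  also have "(\<Sum>k\<in>S. sm (br c a k) (\<rho> k v)) = 0"
    using ideal c a BS by (intro sum.neutral) auto
  finally show ?thesis by (simp add: algebra_simps)
qed

lemma comm_s: "b \<in> S \<Longrightarrow> a \<in> S \<Longrightarrow>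
   \<rho> b (\<rho> a v) = \<rho> a (\<rho> b v) + (\<Sum>k\<in>S. sm (br b a k) (\<rho> k v))"
proof -
  assume c: "b \<in> S" and a: "a \<in> S"
  have "\<rho> b (\<rho> a v) - \<rho> a (\<rho> b v) = (\<Sum>k\<in>B. sm (br b a k) (\<rho> k v))"
    using comm c a BS by auto
  also have "\<dots> = (\<Sum>k\<in>S. sm (br b a k) (\<rho> k v)) + (\<Sum>k\<in>Bp. sm (br b a k) (\<rho> k v))"
    using BS disj finS finBp by (simp add: sum.union_disjoint)
  also have "(\<Sum>k\<in>Bp. sm (br b a k) (\<rho> k v)) = 0"
    using sclosed c a BS by (intro sum.neutral) auto
  finally show ?thesis by (simp add: algebra_simps)
qed


lemma Sop_comm: "a \<in> S \<Longrightarrow> Sop u (\<rho> a v) = \<rho> a (Sop u v) + Sop (\<lambda>k. \<Sum>b\<in>S. u b * br b a k) v"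
proof -
  assume a: "a \<in> S"
  have "Sop u (\<rho> a v) = (\<Sum>b\<in>S. sm (u b) (\<rho> a (\<rho> b v) + (\<Sum>k\<in>S. sm (br b a k) (\<rho> k v))))"
    unfolding Sop_def using comm_s[OF _ a] by (intro sum.cong) auto
  also have "\<dots> = (\<Sum>b\<in>S. sm (u b) (\<rho> a (\<rho> b v))) + (\<Sum>b\<in>S. \<Sum>k\<in>S. sm (u b * br b a k) (\<rho> k v))"
    by (simp add: sum.distrib scale_right_distrib scale_sum_right)
  also have "(\<Sum>b\<in>S. sm (u b) (\<rho> a (\<rho> b v))) = \<rho> a (Sop u v)"
    unfolding Sop_def using a BS by (simp add: rho_sum rho_scale)
  also have "(\<Sum>b\<in>S. \<Sum>k\<in>S. sm (u b * br b a k) (\<rho> k v)) = Sop (\<lambda>k. \<Sum>b\<in>S. u b * br b a k) v"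
    unfolding Sop_def by (subst sum.swap) (simp add: scale_sum_left)
  finally show ?thesis .
qed

lemma Pop_comm: "a \<in> S \<Longrightarrow> Pop l (\<rho> a v) = \<rho> a (Pop l v) + sm (cst l a) v + Pop (\<lambda>k. \<Sum>c\<in>Bp. l c * br c a k) v"
proof -
  assume a: "a \<in> S"
  have aB: "a \<in> B" using a BS by auto
  have "Pop l (\<rho> a v) = (\<Sum>c\<in>Bp. sm (l c) (\<rho> a (\<rho> c v) - sm (\<phi> c) (\<rho> a v)) + sm (l c) (\<Sum>k\<in>Bp. sm (br c a k) (\<rho> k v)))"
    unfolding Pop_def using comm_p[OF _ a] by (intro sum.cong) (auto simp: algebra_simps)
  also have "\<dots> = \<rho> a (Pop l v) + (\<Sum>c\<in>Bp. \<Sum>k\<in>Bp. sm (l c * br c a k) (\<rho> k v))"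
    unfolding Pop_def using aB by (simp add: sum.distrib rho_sum rho_scale rho_diff scale_sum_right)
  also have "(\<Sum>c\<in>Bp. \<Sum>k\<in>Bp. sm (l c * br c a k) (\<rho> k v)) = 
      (\<Sum>c\<in>Bp. \<Sum>k\<in>Bp. sm (l c * br c a k * \<phi> k) v) + (\<Sum>c\<in>Bp. \<Sum>k\<in>Bp. sm (l c * br c a k) (\<rho> k v - sm (\<phi> k) v))"
    by (simp add: sum.distrib[symmetric] algebra_simps)
  also have "(\<Sum>c\<in>Bp. \<Sum>k\<in>Bp. sm (l c * br c a k * \<phi> k) v) = sm (cst l a) v"
    unfolding cst_def row_def by (simp add: scale_sum_left sum_distrib_left mult.assoc)
  also have "(\<Sum>c\<in>Bp. \<Sum>k\<in>Bp. sm (l c * br c a k) (\<rho> k v - sm (\<phi> k) v)) = Pop (\<lambda>k. \<Sum>c\<in>Bp. l c * br c a k) v"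
    unfolding Pop_def by (subst sum.swap) (simp add: scale_sum_left)
  finally show ?thesis by (simp add: add.assoc)
qed

lemma Vphi_subspace: "subspace Vphi"
  unfolding subspace_def Vphi_def using BS
  by (auto simp: rho_0 rho_add rho_scale scale_right_distrib scale_left_commute)

end

locale wsetup2 = wsetup +
  fixes my :: "'b \<Rightarrow> complex"
  assumes yK: "\<forall>c\<in>Bp. (\<Sum>b\<in>S. my b * row c b) = 0"
begin


lemma Y_Vphi: "v \<in> Vphi \<Longrightarrow> (Sop my) v \<in> Vphi"
proof -
  assume v: "v \<in> Vphi"
  { fix c assume c: "c \<in> Bp"
    have cB: "c \<in> B" using c BS by auto
    have "\<rho> c ((Sop my) v) = (\<Sum>b\<in>S. sm (my b) (\<rho> b (\<rho> c v) + (\<Sum>k\<in>Bp. sm (br c b k) (\<rho> k v))))"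
      unfolding Sop_def using cB comm_p[OF c] by (simp add: rho_sum rho_scale)
    also have "\<dots> = (\<Sum>b\<in>S. sm (my b) (sm (\<phi> c) (\<rho> b v) + sm (row c b) v))"
      using v c BS unfolding Vphi_def row_def
      by (intro sum.cong) (auto simp: rho_scale scale_sum_left)
    also have "\<dots> = sm (\<phi> c) ((Sop my) v) + sm (\<Sum>b\<in>S. my b * row c b) v"
      unfolding Sop_def by (simp add: sum.distrib scale_right_distrib scale_sum_left scale_sum_right mult.commute)
    also have "\<dots> = sm (\<phi> c) ((Sop my) v)" using yK c by simp
    finally have "\<rho> c ((Sop my) v) = sm (\<phi> c) ((Sop my) v)" . }
  then show ?thesis unfolding Vphi_def by auto
qed

definition pev where
  "pev (g::complex poly) u = (\<Sum>k\<le>degree g. sm (coeff g k) (((Sop my) ^^ k) u))"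

lemma Yp_add: "((Sop my) ^^ k) (x + y) = ((Sop my) ^^ k) x + ((Sop my) ^^ k) y"
  by (induction k) (auto simp: Sop_add)
lemma Yp_scale: "((Sop my) ^^ k) (sm c x) = sm c (((Sop my) ^^ k) x)"
  by (induction k) (auto simp: Sop_scale)
lemma Yp_0: "((Sop my) ^^ k) 0 = 0"
  using Yp_scale[of k 0 0] by simp

lemma pev_bound: "degree g \<le> N \<Longrightarrow> pev g u = (\<Sum>k\<le>N. sm (coeff g k) (((Sop my) ^^ k) u))"
proof -
  assume N: "degree g \<le> N"
  have "(\<Sum>k\<le>N. sm (coeff g k) (((Sop my) ^^ k) u)) = (\<Sum>k\<le>degree g. sm (coeff g k) (((Sop my) ^^ k) u)) + (\<Sum>k\<in>{..N} - {..degree g}. sm (coeff g k) (((Sop my) ^^ k) u))"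
    using N by (subst sum.subset_diff[of "{..degree g}"]) auto
  also have "(\<Sum>k\<in>{..N} - {..degree g}. sm (coeff g k) (((Sop my) ^^ k) u)) = 0"
    by (intro sum.neutral) (auto simp: coeff_eq_0)
  finally show ?thesis unfolding pev_def by simp
qed

lemma pev_add_poly: "pev (g + h) u = pev g u + pev h u"
proof -
  define N where "N = max (degree g) (degree h)"
  have "degree (g + h) \<le> N" unfolding N_def by (rule degree_add_le) auto
  then show ?thesis
    using pev_bound[of "g+h" N] pev_bound[of g N] pev_bound[of h N]
    by (simp add: N_def scale_left_distrib sum.distrib)
qed

lemma pev_smult: "pev (smult c g) u = sm c (pev g u)"
  using pev_bound[of "smult c g" "degree g"] unfolding pev_def
  by (simp add: scale_sum_right)

lemma pev_add_vec: "pev g (x + y) = pev g x + pev g y"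
  unfolding pev_def by (simp add: Yp_add scale_right_distrib sum.distrib)
lemma pev_scale_vec: "pev g (sm c x) = sm c (pev g x)"
  unfolding pev_def by (simp add: Yp_scale scale_sum_right mult.commute)

lemma Y_sum: "(Sop my) (sum f A) = (\<Sum>a\<in>A. (Sop my) (f a))" by (rule Sop_sum)

lemma pev_pCons0: "pev (pCons 0 g) u = (Sop my) (pev g u)"
proof -
  have "pev (pCons 0 g) u = (\<Sum>k\<le>Suc (degree g). sm (coeff (pCons 0 g) k) (((Sop my) ^^ k) u))"
    by (rule pev_bound) (simp add: degree_pCons_le)
  also have "\<dots> = (\<Sum>k\<le>degree g. sm (coeff g k) (((Sop my) ^^ Suc k) u))"
    by (subst sum.atMost_Suc_shift) simp
  also have "\<dots> = (Sop my) (pev g u)"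
    unfolding pev_def by (simp add: Y_sum Sop_scale)
  finally show ?thesis .
qed

lemma pev_const: "pev [:c:] u = sm c u"
  unfolding pev_def by simp

lemma pev_pCons: "pev (pCons a g) u = sm a u + (Sop my) (pev g u)"
proof -
  have "pCons a g = [:a:] + pCons 0 g" by simp
  then show ?thesis by (metis pev_add_poly pev_const pev_pCons0)
qed

lemma pev_commY: "pev g ((Sop my) u) = (Sop my) (pev g u)"
  unfolding pev_def by (simp add: Y_sum Sop_scale funpow_swap1)

lemma pev_0: "pev 0 u = 0" by (simp add: pev_def)

lemma pev_Vphi: "u \<in> Vphi \<Longrightarrow> pev g u \<in> Vphi"
  by (induction g) (auto simp: pev_pCons pev_0 subspace_0[OF Vphi_subspace] intro!: subspace_add[OF Vphi_subspace] subspace_scale[OF Vphi_subspace] Y_Vphi)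


fun Mset where
  "Mset v0 0 = {pev g v0 | g. True}"
| "Mset v0 (Suc d) = {m + (\<Sum>a\<in>S. \<rho> a (f a)) | m f. m \<in> Mset v0 d \<and> (\<forall>a\<in>S. f a \<in> Mset v0 d)}"

lemma sum_rho_0: "(\<Sum>a\<in>S. \<rho> a 0) = 0"
  using BS by (intro sum.neutral) (auto simp: rho_0)

lemma M_sub: "subspace (Mset v0 d)"
proof (induction d)
  case 0
  show ?case unfolding subspace_def
  proof (intro conjI allI ballI impI)
    show "0 \<in> Mset v0 0" by (auto intro!: exI[of _ 0] simp: pev_0)
    fix x y assume "x \<in> Mset v0 0" "y \<in> Mset v0 0"
    then show "x + y \<in> Mset v0 0" by (auto simp: pev_add_poly[symmetric])
  next
    fix c x assume "x \<in> Mset v0 0"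
    then show "sm c x \<in> Mset v0 0" by (auto simp: pev_smult[symmetric])
  qed
next
  case (Suc d)
  show ?case unfolding subspace_def
  proof (intro conjI allI ballI impI)
    show "0 \<in> Mset v0 (Suc d)"
      using subspace_0[OF Suc.IH] sum_rho_0 by (auto intro!: exI[of _ 0] exI[of _ "\<lambda>_. 0"])
    fix x y assume "x \<in> Mset v0 (Suc d)" "y \<in> Mset v0 (Suc d)"
    then obtain m f m' f' where x: "x = m + (\<Sum>a\<in>S. \<rho> a (f a))" "m \<in> Mset v0 d" "\<forall>a\<in>S. f a \<in> Mset v0 d"
      and y: "y = m' + (\<Sum>a\<in>S. \<rho> a (f' a))" "m' \<in> Mset v0 d" "\<forall>a\<in>S. f' a \<in> Mset v0 d" by auto
    have "x + y = (m + m') + (\<Sum>a\<in>S. \<rho> a (f a + f' a))"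
      using x y BS by (simp add: rho_add sum.distrib algebra_simps)
    moreover have "m + m' \<in> Mset v0 d" "\<forall>a\<in>S. f a + f' a \<in> Mset v0 d"
      using x y subspace_add[OF Suc.IH] by auto
    ultimately show "x + y \<in> Mset v0 (Suc d)" by auto
  next
    fix c x assume "x \<in> Mset v0 (Suc d)"
    then obtain m f where x: "x = m + (\<Sum>a\<in>S. \<rho> a (f a))" "m \<in> Mset v0 d" "\<forall>a\<in>S. f a \<in> Mset v0 d" by auto
    have "sm c x = sm c m + (\<Sum>a\<in>S. \<rho> a (sm c (f a)))"
      using x BS by (simp add: rho_scale scale_sum_right scale_right_distrib)
    moreover have "sm c m \<in> Mset v0 d" "\<forall>a\<in>S. sm c (f a) \<in> Mset v0 d"
      using x subspace_scale[OF Suc.IH] by auto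
    ultimately show "sm c x \<in> Mset v0 (Suc d)" by auto
  qed
qed

lemma M_mono: "x \<in> Mset v0 d \<Longrightarrow> x \<in> Mset v0 (Suc d)"
  using subspace_0[OF M_sub[of v0 d]] sum_rho_0 by (auto intro!: exI[of _ x] exI[of _ "\<lambda>_. 0"])

lemma M_mono_le: "i \<le> j \<Longrightarrow> Mset v0 i \<subseteq> Mset v0 j"
  by (induction j rule: dec_induct) (use M_mono in auto)

lemma M_rho: "a \<in> S \<Longrightarrow> x \<in> Mset v0 d \<Longrightarrow> \<rho> a x \<in> Mset v0 (Suc d)"
proof -
  assume a: "a \<in> S" and x: "x \<in> Mset v0 d"
  have "(\<Sum>b\<in>S. \<rho> b (if b = a then x else 0)) = \<rho> a x"
    using a finS BS by (simp add: if_distrib rho_0 cong: if_cong)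
  moreover have "\<forall>b\<in>S. (if b = a then x else 0) \<in> Mset v0 d"
    using x subspace_0[OF M_sub] by auto
  ultimately show ?thesis using subspace_0[OF M_sub[of v0 d]]
    by (auto intro!: exI[of _ 0] exI[of _ "\<lambda>b. if b = a then x else 0"])
qed

lemma M_Sop: "x \<in> Mset v0 d \<Longrightarrow> Sop u x \<in> Mset v0 (Suc d)"
  unfolding Sop_def by (intro subspace_sum[OF M_sub] subspace_scale[OF M_sub] M_rho)

lemma M_Y: "x \<in> Mset v0 d \<Longrightarrow> Sop my x \<in> Mset v0 d"
proof (induction d arbitrary: x)
  case 0
  then show ?case by (auto simp: pev_pCons0[symmetric])
next
  case (Suc d)
  then obtain m f where x: "x = m + (\<Sum>a\<in>S. \<rho> a (f a))" "m \<in> Mset v0 d" "\<forall>a\<in>S. f a \<in> Mset v0 d" by auto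
  have "Sop my x = Sop my m + (\<Sum>a\<in>S. \<rho> a (Sop my (f a)) + Sop (\<lambda>k. \<Sum>b\<in>S. my b * br b a k) (f a))"
    using x by (simp add: Sop_add Sop_sum Sop_comm)
  also have "\<dots> \<in> Mset v0 (Suc d)"
    using x Suc.IH
    by (intro subspace_add[OF M_sub] subspace_sum[OF M_sub] M_mono M_rho M_Sop) auto
  finally show ?case .
qed


declare Mset.simps[simp del]
lemma M0_iff: "x \<in> Mset v0 0 \<longleftrightarrow> (\<exists>g. x = pev g v0)" by (auto simp: Mset.simps)
lemma MSuc_iff: "x \<in> Mset v0 (Suc d) \<longleftrightarrow> (\<exists>m f. x = m + (\<Sum>a\<in>S. \<rho> a (f a)) \<and> m \<in> Mset v0 d \<and> (\<forall>a\<in>S. f a \<in> Mset v0 d))"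
  by (simp add: Mset.simps)

lemma Pop_sum: "Pop u (sum f A) = (\<Sum>a\<in>A. Pop u (f a))"
  by (induction A rule: infinite_finite_induct) (auto simp: Pop_0 Pop_add)
lemma Pop_diff: "Pop u (x - y) = Pop u x - Pop u y"
  using Pop_add[of u "x - y" y] by (simp add: algebra_simps)

lemma M0_Vphi: "v0 \<in> Vphi \<Longrightarrow> x \<in> Mset v0 0 \<Longrightarrow> x \<in> Vphi"
  using pev_Vphi by (auto simp: M0_iff)

lemma Pop_M0: "v0 \<in> Vphi \<Longrightarrow> x \<in> Mset v0 0 \<Longrightarrow> Pop l x = 0"
  using M0_Vphi Pop_Vphi by blast

lemma Pop_MSuc: "v0 \<in> Vphi \<Longrightarrow> x \<in> Mset v0 (Suc d) \<Longrightarrow> Pop l x \<in> Mset v0 d"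
proof (induction d arbitrary: x l)
  case 0
  then obtain m f where x: "x = m + (\<Sum>a\<in>S. \<rho> a (f a))" "m \<in> Mset v0 0" "\<forall>a\<in>S. f a \<in> Mset v0 0" by (auto simp: MSuc_iff)
  have "Pop l x = Pop l m + (\<Sum>a\<in>S. \<rho> a (Pop l (f a)) + sm (cst l a) (f a) + Pop (\<lambda>k. \<Sum>c\<in>Bp. l c * br c a k) (f a))"
    using x by (simp add: Pop_add Pop_sum Pop_comm)
  also have "\<dots> = (\<Sum>a\<in>S. sm (cst l a) (f a))"
    using x Pop_M0[OF 0(1)] BS by (simp add: rho_0)
  also have "\<dots> \<in> Mset v0 0"
    using x by (intro subspace_sum[OF M_sub] subspace_scale[OF M_sub]) auto
  finally show ?case .
next
  case (Suc d)
  then obtain m f where x: "x = m + (\<Sum>a\<in>S. \<rho> a (f a))" "m \<in> Mset v0 (Suc d)" "\<forall>a\<in>S. f a \<in> Mset v0 (Suc d)"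
    using MSuc_iff[of x v0 "Suc d"] by blast
  have "Pop l x = Pop l m + (\<Sum>a\<in>S. \<rho> a (Pop l (f a)) + sm (cst l a) (f a) + Pop (\<lambda>k. \<Sum>c\<in>Bp. l c * br c a k) (f a))"
    using x by (simp add: Pop_add Pop_sum Pop_comm)
  also have "\<dots> \<in> Mset v0 (Suc d)"
  proof (intro subspace_add[OF M_sub] subspace_sum[OF M_sub])
    show "Pop l m \<in> Mset v0 (Suc d)" using x Suc by (intro M_mono) auto
    fix a assume a: "a \<in> S"
    show "\<rho> a (Pop l (f a)) \<in> Mset v0 (Suc d)" using x Suc a by (intro M_rho) auto
    show "sm (cst l a) (f a) \<in> Mset v0 (Suc d)" using x a by (intro subspace_scale[OF M_sub]) auto
    show "Pop (\<lambda>k. \<Sum>c\<in>Bp. l c * br c a k) (f a) \<in> Mset v0 (Suc d)" using x Suc a by (intro M_mono) auto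
  qed
  finally show ?case .
qed

lemma Pop_M: "v0 \<in> Vphi \<Longrightarrow> x \<in> Mset v0 d \<Longrightarrow> Pop l x \<in> Mset v0 d"
  by (cases d) (auto simp: Pop_M0 subspace_0[OF M_sub] intro: M_mono Pop_MSuc)

lemma SopPop_M: "v0 \<in> Vphi \<Longrightarrow> x \<in> Mset v0 d \<Longrightarrow> Sop u (Pop l x) \<in> Mset v0 d"
  by (cases d) (auto simp: Pop_M0 Sop_0 subspace_0[OF M_sub] intro: M_Sop Pop_MSuc)

lemma Pop_point: "b \<in> Bp \<Longrightarrow> Pop (\<lambda>c. if c = b then 1 else 0) x = \<rho> b x - sm (\<phi> b) x"
  unfolding Pop_def
  by (subst sum.cong[OF refl, of _ _ "\<lambda>c. if c = b then \<rho> c x - sm (\<phi> c) x else 0"]) (auto simp: finBp)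

lemma union_UNIV:
  assumes v0: "v0 \<in> Vphi" "v0 \<noteq> 0"
    and irr: "\<forall>T. subspace T \<and> (\<forall>b\<in>B. \<rho> b ` T \<subseteq> T) \<longrightarrow> T = {0} \<or> T = UNIV"
  shows "(\<Union>d. Mset v0 d) = UNIV"
proof -
  let ?U = "\<Union>d. Mset v0 d"
  have sub: "subspace ?U" unfolding subspace_def
  proof (intro conjI allI ballI impI)
    show "0 \<in> ?U" using subspace_0[OF M_sub[of v0 0]] by auto
    fix x y assume "x \<in> ?U" "y \<in> ?U"
    then obtain i j where "x \<in> Mset v0 i" "y \<in> Mset v0 j" by auto
    then have "x \<in> Mset v0 (max i j)" "y \<in> Mset v0 (max i j)"
      by (meson M_mono_le max.cobounded1 max.cobounded2 subsetD)+
    then show "x + y \<in> ?U" using subspace_add[OF M_sub] by blast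
  next
    fix c x assume "x \<in> ?U"
    then show "sm c x \<in> ?U" using subspace_scale[OF M_sub] by blast
  qed
  have inv: "\<forall>b\<in>B. \<rho> b ` ?U \<subseteq> ?U"
  proof (intro ballI subsetI)
    fix b y assume b: "b \<in> B" and "y \<in> \<rho> b ` ?U"
    then obtain x d where y: "y = \<rho> b x" and x: "x \<in> Mset v0 d" by auto
    show "y \<in> ?U"
    proof (cases "b \<in> S")
      case True then show ?thesis using M_rho[OF True x] y by blast
    next
      case False
      then have bp: "b \<in> Bp" using b BS by auto
      have "\<rho> b x = Pop (\<lambda>c. if c = b then 1 else 0) x + sm (\<phi> b) x"
        using Pop_point[OF bp] by simp
      also have "\<dots> \<in> Mset v0 d"
        using x v0 by (intro subspace_add[OF M_sub] subspace_scale[OF M_sub] Pop_M) auto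
      finally show ?thesis using y by blast
    qed
  qed
  have "v0 \<in> Mset v0 0" using pev_const[of 1 v0] by (auto simp: M0_iff intro!: exI[of _ "[:1:]"])
  then have "v0 \<in> ?U" by blast
  then show ?thesis using irr sub inv v0(2) by blast
qed

definition Eop where
  "Eop I ls us x = (\<Sum>i\<in>I. Sop (us i) (Pop (ls i) x))"

lemma Eop_add: "Eop I ls us (x + y) = Eop I ls us x + Eop I ls us y"
  unfolding Eop_def by (simp add: Pop_add Sop_add sum.distrib)
lemma Eop_scale: "Eop I ls us (sm c x) = sm c (Eop I ls us x)"
  unfolding Eop_def by (simp add: Pop_scale Sop_scale scale_sum_right)
lemma Eop_0: "Eop I ls us 0 = 0"
  using Eop_scale[of I ls us 0 0] by simp
lemma Eop_sum: "Eop I ls us (sum f A) = (\<Sum>a\<in>A. Eop I ls us (f a))"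
  by (induction A rule: infinite_finite_induct) (auto simp: Eop_0 Eop_add)
lemma Eop_diff: "Eop I ls us (x - y) = Eop I ls us x - Eop I ls us y"
  using Eop_add[of I ls us "x - y" y] by (simp add: algebra_simps)

lemma Eop_Vphi: "x \<in> Vphi \<Longrightarrow> Eop I ls us x = 0"
  unfolding Eop_def by (simp add: Pop_Vphi Sop_0)


lemma E_M0: "v0 \<in> Vphi \<Longrightarrow> x \<in> Mset v0 0 \<Longrightarrow> Eop I ls us x = 0"
  unfolding Eop_def by (simp add: Pop_M0 Sop_0)

lemma E_rho:
  assumes v0: "v0 \<in> Vphi" and u: "u \<in> Mset v0 d" and a: "a \<in> S"
    and T: "\<forall>a\<in>S. \<exists>\<kappa>. \<forall>u. (\<Sum>i\<in>I. sm (cst (ls i) a) (Sop (us i) u)) = \<rho> a u + sm \<kappa> (Sop my u)"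
  shows "\<exists>R\<in>Mset v0 d. Eop I ls us (\<rho> a u) = \<rho> a (Eop I ls us u) + R + \<rho> a u"
proof -
  obtain \<kappa> where k: "\<forall>u. (\<Sum>i\<in>I. sm (cst (ls i) a) (Sop (us i) u)) = \<rho> a u + sm \<kappa> (Sop my u)"
    using T a by blast
  have aB: "a \<in> B" using a BS by auto
  define R where "R = (\<Sum>i\<in>I. Sop (\<lambda>k. \<Sum>b\<in>S. us i b * br b a k) (Pop (ls i) u))
     + sm \<kappa> (Sop my u) + (\<Sum>i\<in>I. Sop (us i) (Pop (\<lambda>k. \<Sum>c\<in>Bp. ls i c * br c a k) u))"
  have "Eop I ls us (\<rho> a u) = (\<Sum>i\<in>I. \<rho> a (Sop (us i) (Pop (ls i) u)) + Sop (\<lambda>k. \<Sum>b\<in>S. us i b * br b a k) (Pop (ls i) u)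
        + sm (cst (ls i) a) (Sop (us i) u) + Sop (us i) (Pop (\<lambda>k. \<Sum>c\<in>Bp. ls i c * br c a k) u))"
    unfolding Eop_def using a by (simp add: Pop_comm Sop_add Sop_scale Sop_comm)
  also have "\<dots> = \<rho> a (Eop I ls us u) + R + \<rho> a u"
    unfolding Eop_def R_def using k aB by (simp add: sum.distrib rho_sum algebra_simps)
  finally have "Eop I ls us (\<rho> a u) = \<rho> a (Eop I ls us u) + R + \<rho> a u" .
  moreover have "R \<in> Mset v0 d"
    unfolding R_def using u v0
    by (intro subspace_add[OF M_sub] subspace_sum[OF M_sub] subspace_scale[OF M_sub] SopPop_M M_Y) auto
  ultimately show ?thesis by blast
qed

lemma E_step:
  assumes v0: "v0 \<in> Vphi"
    and T: "\<forall>a\<in>S. \<exists>\<kappa>. \<forall>u. (\<Sum>i\<in>I. sm (cst (ls i) a) (Sop (us i) u)) = \<rho> a u + sm \<kappa> (Sop my u)"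
    and H: "\<forall>u\<in>Mset v0 d. Eop I ls us u - sm (of_nat d) u \<in> Mset v0 d \<and> (\<forall>a\<in>S. \<rho> a (Eop I ls us u - sm (of_nat d) u) \<in> Mset v0 d)"
    and x: "x \<in> Mset v0 (Suc d)"
  shows "Eop I ls us x - sm (of_nat (Suc d)) x \<in> Mset v0 d"
proof -
  obtain m f where x: "x = m + (\<Sum>a\<in>S. \<rho> a (f a))" "m \<in> Mset v0 d" "\<forall>a\<in>S. f a \<in> Mset v0 d"
    using x by (auto simp: MSuc_iff)
  have "\<forall>a\<in>S. \<exists>R\<in>Mset v0 d. Eop I ls us (\<rho> a (f a)) = \<rho> a (Eop I ls us (f a)) + R + \<rho> a (f a)"
    using E_rho[OF v0 _ _ T] x by blast
  then obtain R where R: "\<forall>a\<in>S. R a \<in> Mset v0 d \<and> Eop I ls us (\<rho> a (f a)) = \<rho> a (Eop I ls us (f a)) + R a + \<rho> a (f a)"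
    by metis
  have "Eop I ls us x - sm (of_nat (Suc d)) x = (Eop I ls us m - sm (of_nat d) m) - m
     + (\<Sum>a\<in>S. \<rho> a (Eop I ls us (f a) - sm (of_nat d) (f a)) + R a)"
  proof -
    have "Eop I ls us x - sm (of_nat (Suc d)) x = Eop I ls us m - sm (of_nat (Suc d)) m
       + (\<Sum>a\<in>S. Eop I ls us (\<rho> a (f a)) - sm (of_nat (Suc d)) (\<rho> a (f a)))"
      using x by (simp add: Eop_add Eop_sum scale_right_distrib scale_sum_right sum_subtractf)
    also have "(\<Sum>a\<in>S. Eop I ls us (\<rho> a (f a)) - sm (of_nat (Suc d)) (\<rho> a (f a)))
        = (\<Sum>a\<in>S. \<rho> a (Eop I ls us (f a) - sm (of_nat d) (f a)) + R a)"
    proof (intro sum.cong refl)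
      fix a assume a: "a \<in> S"
      then have aB: "a \<in> B" using BS by auto
      show "Eop I ls us (\<rho> a (f a)) - sm (of_nat (Suc d)) (\<rho> a (f a)) = \<rho> a (Eop I ls us (f a) - sm (of_nat d) (f a)) + R a"
        using R a aB by (simp add: rho_diff rho_scale scale_left_distrib algebra_simps)
    qed
    finally show ?thesis by (simp add: scale_left_distrib algebra_simps)
  qed
  also have "\<dots> \<in> Mset v0 d"
  proof -
    have h1: "Eop I ls us m - sm (of_nat d) m \<in> Mset v0 d" using H x by blast
    have h2: "(\<Sum>a\<in>S. \<rho> a (Eop I ls us (f a) - sm (of_nat d) (f a)) + R a) \<in> Mset v0 d"
      using H x R by (intro subspace_sum[OF M_sub] subspace_add[OF M_sub]) auto
    show ?thesis by (rule subspace_add[OF M_sub subspace_diff[OF M_sub h1 x(2)] h2])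
  qed
  finally show ?thesis .
qed

lemma E_Suc:
  assumes v0: "v0 \<in> Vphi"
    and T: "\<forall>a\<in>S. \<exists>\<kappa>. \<forall>u. (\<Sum>i\<in>I. sm (cst (ls i) a) (Sop (us i) u)) = \<rho> a u + sm \<kappa> (Sop my u)"
  shows "x \<in> Mset v0 (Suc d) \<Longrightarrow> Eop I ls us x - sm (of_nat (Suc d)) x \<in> Mset v0 d"
proof (induction d arbitrary: x)
  case 0
  show ?case
  proof (rule E_step[OF v0 T _ 0])
    show "\<forall>u\<in>Mset v0 0. Eop I ls us u - sm (of_nat 0) u \<in> Mset v0 0 \<and> (\<forall>a\<in>S. \<rho> a (Eop I ls us u - sm (of_nat 0) u) \<in> Mset v0 0)"
      using v0 BS by (auto simp: E_M0 rho_0 subspace_0[OF M_sub])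
  qed
next
  case (Suc d)
  show ?case
  proof (rule E_step[OF v0 T _ Suc.prems])
    show "\<forall>u\<in>Mset v0 (Suc d). Eop I ls us u - sm (of_nat (Suc d)) u \<in> Mset v0 (Suc d) \<and> (\<forall>a\<in>S. \<rho> a (Eop I ls us u - sm (of_nat (Suc d)) u) \<in> Mset v0 (Suc d))"
      using Suc.IH by (auto intro: M_mono M_rho)
  qed
qed

lemma Vphi_M0:
  assumes v0: "v0 \<in> Vphi"
    and T: "\<forall>a\<in>S. \<exists>\<kappa>. \<forall>u. (\<Sum>i\<in>I. sm (cst (ls i) a) (Sop (us i) u)) = \<rho> a u + sm \<kappa> (Sop my u)"
  shows "x \<in> Vphi \<Longrightarrow> x \<in> Mset v0 d \<Longrightarrow> x \<in> Mset v0 0"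
proof (induction d)
  case (Suc d)
  have "Eop I ls us x - sm (of_nat (Suc d)) x \<in> Mset v0 d" using E_Suc[OF v0 T Suc.prems(2)] .
  then have "sm (- 1 / of_nat (Suc d)) (Eop I ls us x - sm (of_nat (Suc d)) x) \<in> Mset v0 d"
    by (rule subspace_scale[OF M_sub])
  moreover have "sm (- 1 / of_nat (Suc d)) (Eop I ls us x - sm (of_nat (Suc d)) x) = x"
  proof -
    have c: "(- 1 / of_nat (Suc d)) * (- of_nat (Suc d)) = (1::complex)"
      by (simp add: field_simps del: of_nat_Suc)
    have "sm (- 1 / of_nat (Suc d)) (Eop I ls us x - sm (of_nat (Suc d)) x)
        = sm (- 1 / of_nat (Suc d)) (sm (- of_nat (Suc d)) x)"
    proof -
      have e: "Eop I ls us x = 0" by (rule Eop_Vphi[OF Suc.prems(1)])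
      have "Eop I ls us x - sm (of_nat (Suc d)) x = sm (- of_nat (Suc d)) x"
        unfolding e by (simp only: diff_0 scale_minus_left)
      then show ?thesis by simp
    qed
    also have "\<dots> = x" by (simp only: scale_scale c scale_one)
    finally show ?thesis .
  qed
  ultimately have "x \<in> Mset v0 d" by simp
  then show ?case using Suc by blast
qed auto


lemma pev_eigen: "Sop my u = sm z u \<Longrightarrow> pev g u = sm (poly g z) u"
  by (induction g) (auto simp: pev_pCons pev_0 Sop_scale scale_left_distrib mult.commute)

lemma eigen:
  assumes "u \<in> Vphi" "u \<noteq> 0" "g \<noteq> 0" "pev g u = 0"
  shows "\<exists>u'\<in>Vphi. u' \<noteq> 0 \<and> (\<exists>z. Sop my u' = sm z u')"
  using assms
proof (induction "degree g" arbitrary: g rule: less_induct)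
  case less
  show ?case
  proof (cases "degree g = 0")
    case True
    then obtain c where g: "g = [:c:]" by (metis degree_eq_zeroE)
    then have "c \<noteq> 0" using less by auto
    then show ?thesis using less g by (simp add: pev_const)
  next
    case False
    then have "\<not> constant (poly g)" by (simp add: constant_degree)
    then obtain z where "poly g z = 0" using fundamental_theorem_of_algebra by blast
    then have "[:- z, 1:] dvd g" by (simp add: dvd_iff_poly_eq_0)
    then obtain h where gh: "g = [:- z, 1:] * h" by (auto elim: dvdE)
    have h0: "h \<noteq> 0" using gh less by auto
    have "degree ([:- z, 1:] * h) = degree [:- z, 1:] + degree h" by (rule degree_mult_eq) (use h0 in auto)
    then have dg: "degree g = Suc (degree h)" using gh by simp
    have e: "[:- z, 1:] * h = smult (- z) h + pCons 0 h"
      by (simp only: mult_pCons_left) (simp add: one_pCons[symmetric])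
    have pg: "pev g u = Sop my (pev h u) - sm z (pev h u)"
      unfolding gh e pev_add_poly pev_smult pev_pCons0 by (simp add: algebra_simps)
    show ?thesis
    proof (cases "pev h u = 0")
      case True
      then show ?thesis using less.hyps[of h] dg h0 less.prems by auto
    next
      case False
      then show ?thesis using pg less.prems pev_Vphi[OF less.prems(1)] by (auto intro!: bexI[of _ "pev h u"])
    qed
  qed
qed

lemma dim_one:
  assumes w: "w \<in> Vphi" "w \<noteq> 0"
    and irr: "\<forall>T. subspace T \<and> (\<forall>b\<in>B. \<rho> b ` T \<subseteq> T) \<longrightarrow> T = {0} \<or> T = UNIV"
    and T: "\<forall>a\<in>S. \<exists>\<kappa>. \<forall>u. (\<Sum>i\<in>I. sm (cst (ls i) a) (Sop (us i) u)) = \<rho> a u + sm \<kappa> (Sop my u)"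
  shows "dim Vphi = 1"
proof -
  have key: "Vphi \<subseteq> Mset v 0" if "v \<in> Vphi" "v \<noteq> 0" for v
  proof
    fix x assume x: "x \<in> Vphi"
    have "x \<in> (\<Union>d. Mset v d)" using union_UNIV[OF that irr] by blast
    then obtain d where "x \<in> Mset v d" by blast
    then show "x \<in> Mset v 0" using Vphi_M0[OF that(1) T x] by blast
  qed
  obtain u where u: "u \<in> Vphi" "u \<noteq> 0" and z: "\<exists>z. Sop my u = sm z u"
  proof (cases "Sop my w = 0")
    case True
    then show ?thesis using that[of w] w by (metis scale_zero_left)
  next
    case False
    have Yw: "Sop my w \<in> Vphi" using Y_Vphi[OF w(1)] .
    have "w \<in> Mset (Sop my w) 0" using key[OF Yw False] w(1) by blast
    then obtain g where "w = pev g (Sop my w)" unfolding M0_iff by blast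
    then have wg: "w = pev (pCons 0 g) w" by (simp add: pev_commY pev_pCons0)
    define q where "q = 1 - pCons 0 g"
    have "pev 1 w = pev q w + pev (pCons 0 g) w" unfolding q_def by (simp add: pev_add_poly[symmetric])
    moreover have "pev 1 w = w" using pev_const[of 1 w] by (simp add: one_pCons)
    ultimately have "pev q w = 0" using wg by (metis add_cancel_left_left)
    moreover have "q \<noteq> 0"
    proof
      assume "q = 0"
      then have "coeff q 0 = 0" by simp
      then show False unfolding q_def by simp
    qed
    ultimately show ?thesis using eigen[OF w _ ] that by blast
  qed
  obtain z where z: "Sop my u = sm z u" using z by blast
  have "Vphi \<subseteq> span {u}"
  proof
    fix x assume "x \<in> Vphi"
    then have "x \<in> Mset u 0" using key[OF u] by blast
    then obtain g where "x = pev g u" unfolding M0_iff by blast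
    then have "x = sm (poly g z) u" using pev_eigen[OF z] by simp
    then show "x \<in> span {u}" by (simp add: span_base span_scale)
  qed
  moreover have "span {u} \<subseteq> Vphi" using u Vphi_subspace by (intro span_minimal) auto
  ultimately have "span Vphi = span {u}" using Vphi_subspace by (simp add: span_eq_iff[THEN iffD2])
  then have "dim Vphi = dim {u}" by (metis dim_span)
  moreover have "independent {u}" using u by (intro independent_insertI) (auto simp: independent_empty)
  ultimately show ?thesis by (simp add: dim_eq_card_independent)
qed

end

context wsetup
begin

lemma T_from_coeffs:
  assumes a: "a \<in> S"
    and co: "\<forall>b\<in>S. (\<Sum>i\<in>I. cst (ls i) a * us i b) = (if b = a then 1 else 0) + \<kappa> * my b"
  shows "\<forall>u. (\<Sum>i\<in>I. sm (cst (ls i) a) (Sop (us i) u)) = \<rho> a u + sm \<kappa> (Sop my u)"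
proof
  fix u
  have "(\<Sum>i\<in>I. sm (cst (ls i) a) (Sop (us i) u)) = (\<Sum>b\<in>S. sm (\<Sum>i\<in>I. cst (ls i) a * us i b) (\<rho> b u))"
    unfolding Sop_def by (simp add: scale_sum_right scale_sum_left sum.swap[of _ I])
  also have "\<dots> = (\<Sum>b\<in>S. sm (if b = a then 1 else 0) (\<rho> b u) + sm (\<kappa> * my b) (\<rho> b u))"
    using co by (intro sum.cong) (auto simp: scale_left_distrib)
  also have "\<dots> = \<rho> a u + sm \<kappa> (Sop my u)"
    unfolding Sop_def sum.distrib using a finS
    by (simp add: scale_sum_right if_distrib[of "\<lambda>t. sm t _"] cong: if_cong)
  finally show "(\<Sum>i\<in>I. sm (cst (ls i) a) (Sop (us i) u)) = \<rho> a u + sm \<kappa> (Sop my u)" .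
qed

definition pt :: "'b \<Rightarrow> 'b \<Rightarrow> complex" where "pt q = (\<lambda>c. if c = q then 1 else 0)"

lemma cst_pt: "q \<in> Bp \<Longrightarrow> cst (pt q) a = row q a"
  unfolding cst_def pt_def
  by (subst sum.cong[OF refl, of _ _ "\<lambda>c. if c = q then row c a else 0"]) (auto simp: finBp)

end


locale wsetup3 = wsetup +
  fixes e0 h0 f0
  assumes S3: "S = {e0, h0, f0}" and dist: "e0 \<noteq> h0" "e0 \<noteq> f0" "h0 \<noteq> f0"
begin

definition mk :: "complex \<Rightarrow> complex \<Rightarrow> complex \<Rightarrow> 'b \<Rightarrow> complex" where
  "mk x y z = (\<lambda>b. if b = e0 then x else if b = h0 then y else if b = f0 then z else 0)"
definition crossv where
  "crossv r s = mk (r h0 * s f0 - r f0 * s h0) (r f0 * s e0 - r e0 * s f0) (r e0 * s h0 - r h0 * s e0)"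
definition dotv where
  "dotv r s = r e0 * s e0 + r h0 * s h0 + r f0 * s f0"

lemma mk_simps [simp]: "mk x y z e0 = x" "mk x y z h0 = y" "mk x y z f0 = z"
  unfolding mk_def using dist by auto

lemma sumS: "(\<Sum>b\<in>S. f b) = f e0 + f h0 + f f0"
  using S3 dist by (simp add: add.assoc)

lemma adj:
  assumes D: "dotv t (crossv r1 r2) = D" and a: "a \<in> S" and b: "b \<in> S"
  shows "r1 a * crossv r2 t b + r2 a * crossv t r1 b + t a * crossv r1 r2 b = (if b = a then D else 0)"
  using a b D S3 dist unfolding crossv_def dotv_def
  by (auto simp: algebra_simps)

lemma main_rows:
  assumes q1: "q1 \<in> Bp" and q2: "q2 \<in> Bp"
    and cr: "\<exists>b\<in>S. crossv (row q1) (row q2) b \<noteq> 0"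
    and w: "w \<in> Vphi" "w \<noteq> 0"
    and irr: "\<forall>T. subspace T \<and> (\<forall>b\<in>B. \<rho> b ` T \<subseteq> T) \<longrightarrow> T = {0} \<or> T = UNIV"
  shows "dim Vphi = 1"
proof -
  define r1 where "r1 = row q1"
  define r2 where "r2 = row q2"
  define y where "y = crossv r1 r2"
  show ?thesis
  proof (cases "\<forall>q\<in>Bp. dotv (row q) y = 0")
    case True
    interpret W2: wsetup2 sm B Bp S br \<rho> \<phi> y
    proof unfold_locales
      show "\<forall>c\<in>Bp. (\<Sum>b\<in>S. y b * row c b) = 0"
        using True by (simp add: sumS dotv_def algebra_simps)
    qed
    define t where "t = mk (cnj (y e0)) (cnj (y h0)) (cnj (y f0))"
    define D where "D = dotv t y"
    have D0: "D \<noteq> 0"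
    proof
      assume "D = 0"
      have "D = y e0 * cnj (y e0) + y h0 * cnj (y h0) + y f0 * cnj (y f0)"
        unfolding D_def dotv_def t_def by (simp add: mult.commute)
      also have "\<dots> = complex_of_real ((Re (y e0))\<^sup>2 + (Im (y e0))\<^sup>2 + ((Re (y h0))\<^sup>2 + (Im (y h0))\<^sup>2) + ((Re (y f0))\<^sup>2 + (Im (y f0))\<^sup>2))"
        by (simp only: complex_mult_cnj of_real_add)
      finally have "complex_of_real ((Re (y e0))\<^sup>2 + (Im (y e0))\<^sup>2 + ((Re (y h0))\<^sup>2 + (Im (y h0))\<^sup>2) + ((Re (y f0))\<^sup>2 + (Im (y f0))\<^sup>2)) = 0"
        using \<open>D = 0\<close> by simp
      then have "(Re (y e0))\<^sup>2 + (Im (y e0))\<^sup>2 + ((Re (y h0))\<^sup>2 + (Im (y h0))\<^sup>2) + ((Re (y f0))\<^sup>2 + (Im (y f0))\<^sup>2) = 0"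
        by (simp only: of_real_eq_0_iff)
      then have "y e0 = 0 \<and> y h0 = 0 \<and> y f0 = 0"
        by (simp add: add_nonneg_eq_0_iff complex_eq_iff)
      then show False using cr S3 unfolding y_def r1_def r2_def by auto
    qed
    define I where "I = {0::nat, 1}"
    define ls where "ls = (\<lambda>i::nat. if i = 0 then pt q1 else pt q2)"
    define us where "us = (\<lambda>i::nat. if i = 0 then (\<lambda>b. crossv r2 t b / D) else (\<lambda>b. crossv t r1 b / D))"
    have T: "\<forall>a\<in>S. \<exists>\<kappa>. \<forall>u. (\<Sum>i\<in>I. sm (cst (ls i) a) (Sop (us i) u)) = \<rho> a u + sm \<kappa> (Sop y u)"
    proof
      fix a assume a: "a \<in> S"
      have "\<forall>b\<in>S. (\<Sum>i\<in>I. cst (ls i) a * us i b) = (if b = a then 1 else 0) + (- t a / D) * y b"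
      proof
        fix b assume b: "b \<in> S"
        have e: "r1 a * crossv r2 t b + r2 a * crossv t r1 b + t a * y b = (if b = a then D else 0)"
          using adj[OF _ a b, of t r1 r2 D] unfolding D_def y_def by simp
        have "(\<Sum>i\<in>I. cst (ls i) a * us i b) = r1 a * (crossv r2 t b / D) + r2 a * (crossv t r1 b / D)"
          unfolding I_def ls_def us_def r1_def r2_def using q1 q2 by (simp add: cst_pt)
        also have "\<dots> = (r1 a * crossv r2 t b + r2 a * crossv t r1 b) / D"
          by (simp add: add_divide_distrib)
        also have "\<dots> = ((if b = a then D else 0) - t a * y b) / D"
          using e by (simp add: eq_diff_eq)
        also have "\<dots> = (if b = a then 1 else 0) + (- t a / D) * y b"
          using D0 by (simp add: field_simps)
        finally show "(\<Sum>i\<in>I. cst (ls i) a * us i b) = (if b = a then 1 else 0) + (- t a / D) * y b" .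
      qed
      then show "\<exists>\<kappa>. \<forall>u. (\<Sum>i\<in>I. sm (cst (ls i) a) (Sop (us i) u)) = \<rho> a u + sm \<kappa> (Sop y u)"
        using T_from_coeffs[OF a] by blast
    qed
    show ?thesis by (rule W2.dim_one[OF w irr T])
  next
    case False
    then obtain q3 where q3: "q3 \<in> Bp" and d3: "dotv (row q3) y \<noteq> 0" by blast
    interpret W2: wsetup2 sm B Bp S br \<rho> \<phi> "\<lambda>_. 0"
      by unfold_locales simp
    define t where "t = row q3"
    define D where "D = dotv t y"
    have D0: "D \<noteq> 0" using d3 unfolding D_def t_def .
    define I where "I = {0::nat, 1, 2}"
    define ls where "ls = (\<lambda>i::nat. if i = 0 then pt q1 else if i = 1 then pt q2 else pt q3)"
    define us where "us = (\<lambda>i::nat. if i = 0 then (\<lambda>b. crossv r2 t b / D) else if i = 1 then (\<lambda>b. crossv t r1 b / D) else (\<lambda>b. y b / D))"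
    have T: "\<forall>a\<in>S. \<exists>\<kappa>. \<forall>u. (\<Sum>i\<in>I. sm (cst (ls i) a) (Sop (us i) u)) = \<rho> a u + sm \<kappa> (Sop (\<lambda>_. 0) u)"
    proof
      fix a assume a: "a \<in> S"
      have "\<forall>b\<in>S. (\<Sum>i\<in>I. cst (ls i) a * us i b) = (if b = a then 1 else 0) + 0 * (\<lambda>_. 0) b"
      proof
        fix b assume b: "b \<in> S"
        have e: "r1 a * crossv r2 t b + r2 a * crossv t r1 b + t a * y b = (if b = a then D else 0)"
          using adj[OF _ a b, of t r1 r2 D] unfolding D_def y_def by simp
        have "(\<Sum>i\<in>I. cst (ls i) a * us i b) = r1 a * (crossv r2 t b / D) + r2 a * (crossv t r1 b / D) + t a * (y b / D)"
          unfolding I_def ls_def us_def r1_def r2_def t_def using q1 q2 q3 by (simp add: cst_pt)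
        also have "\<dots> = (r1 a * crossv r2 t b + r2 a * crossv t r1 b + t a * y b) / D"
          by (simp add: add_divide_distrib)
        also have "\<dots> = (if b = a then D else 0) / D"
          using e by simp
        also have "\<dots> = (if b = a then 1 else 0) + 0 * (\<lambda>_. 0) b"
          using D0 by simp
        finally show "(\<Sum>i\<in>I. cst (ls i) a * us i b) = (if b = a then 1 else 0) + 0 * (\<lambda>_. 0) b" .
      qed
      then show "\<exists>\<kappa>. \<forall>u. (\<Sum>i\<in>I. sm (cst (ls i) a) (Sop (us i) u)) = \<rho> a u + sm \<kappa> (Sop (\<lambda>_. 0) u)"
        using T_from_coeffs[OF a, where \<kappa>=0 and my="\<lambda>_. 0"] by blast
    qed
    show ?thesis by (rule W2.dim_one[OF w irr T])
  qed
qed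


lemma bland_main:
  assumes irr: "irreducible_mod sm B \<rho>" and qw: "quasi_whittaker sm B Bp \<rho> \<phi>"
    and q1: "q1 \<in> Bp" and q2: "q2 \<in> Bp"
    and cr: "\<exists>b\<in>S. crossv (row q1) (row q2) b \<noteq> 0"
  shows "bland sm B Bp \<rho> \<phi>"
proof -
  have irr': "\<forall>T. subspace T \<and> (\<forall>b\<in>B. \<rho> b ` T \<subseteq> T) \<longrightarrow> T = {0} \<or> T = UNIV"
    using irr unfolding irreducible_mod_def is_submodule_def by blast
  have ne: "(UNIV :: 'a set) \<noteq> {0}" using irr unfolding irreducible_mod_def by blast
  obtain w where w: "w \<in> Vphi" and gen: "generated_submod sm B \<rho> w = UNIV"
    using qw unfolding quasi_whittaker_def whittaker_vecs_def Vphi_def by blast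
  have w0: "w \<noteq> 0"
  proof
    assume "w = 0"
    have "is_submodule sm B \<rho> {0}" unfolding is_submodule_def using rho_0 by auto
    then have "generated_submod sm B \<rho> w \<subseteq> {0}" using \<open>w = 0\<close> unfolding generated_submod_def by blast
    then show False using gen ne by auto
  qed
  have "dim Vphi = 1" by (rule main_rows[OF q1 q2 cr w w0 irr'])
  then show ?thesis using irr unfolding bland_def Vphi_def whittaker_vecs_def by simp
qed

end

lemma mk_wsetup3:
  assumes "is_rep sm B br \<rho>" "finite B" "B = S \<union> Bp" "S \<inter> Bp = {}"
    "\<forall>a\<in>B. \<forall>b\<in>Bp. \<forall>c\<in>S. br a b c = 0 \<and> br b a c = 0"
    "\<forall>a\<in>S. \<forall>b\<in>S. \<forall>c\<in>Bp. br a b c = 0"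
    "S = {e0, h0, f0}" "e0 \<noteq> h0" "e0 \<noteq> f0" "h0 \<noteq> f0"
  shows "wsetup3 sm B Bp S br \<rho> e0 h0 f0"
  using assms unfolding is_rep_def wsetup3_def wsetup_def wsetup_axioms_def wsetup3_axioms_def by auto

lemma sum_sc: "finite A \<Longrightarrow> (\<Sum>k\<in>A. sc x c0 k * f k) = (if c0 \<in> A then x * f c0 else 0)"
  unfolding sc_def
  by (subst sum.cong[OF refl, of _ _ "\<lambda>k. if k = c0 then x * f k else 0"]) auto



lemma cga_setup:
  assumes "is_rep sm (cga_basis m) (cga_br m) \<rho>"
  shows "wsetup3 sm (cga_basis m) (cga_p m) {cE, cH, cF} (cga_br m) \<rho> cE cH cF"
proof (rule mk_wsetup3[OF assms])
  show "finite (cga_basis m)" by (simp add: cga_basis_def)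
  show "cga_basis m = {cE, cH, cF} \<union> cga_p m" by (simp add: cga_basis_def cga_p_def)
  show "{cE, cH, cF} \<inter> cga_p m = {}" by (auto simp: cga_p_def)
  show "\<forall>a\<in>cga_basis m. \<forall>b\<in>cga_p m. \<forall>c\<in>{cE, cH, cF}. cga_br m a b c = 0 \<and> cga_br m b a c = 0"
    by (auto simp: cga_basis_def cga_p_def sc_def)
  show "\<forall>a\<in>{cE, cH, cF}. \<forall>b\<in>{cE, cH, cF}. \<forall>c\<in>cga_p m. cga_br m a b c = 0"
    by (auto simp: cga_p_def sc_def)
qed auto

lemma fin_cga_p: "finite (cga_p m)" by (simp add: cga_p_def)

lemma rowE: "j \<le> m \<Longrightarrow> (\<Sum>k\<in>cga_p m. cga_br m (cP j) cE k * \<phi> k) = - of_nat j * \<phi> (cP (j - 1))"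
  by (simp add: sum_sc fin_cga_p) (auto simp: cga_p_def)
lemma rowH: "j \<le> m \<Longrightarrow> (\<Sum>k\<in>cga_p m. cga_br m (cP j) cH k * \<phi> k) = (2 * of_nat j - of_nat m) * \<phi> (cP j)"
  by (simp add: sum_sc fin_cga_p) (auto simp: cga_p_def)
lemma rowF: "(\<Sum>k\<in>cga_p m. cga_br m (cP j) cF k * \<phi> k) = (if Suc j \<le> m then (of_nat j - of_nat m) * \<phi> (cP (Suc j)) else 0)"
  by (simp add: sum_sc fin_cga_p) (auto simp: cga_p_def)


lemma cga_part:
  assumes m: "m \<ge> 1" and nz: "nonzero_on (cga_p m) \<phi>"
    and rep: "is_rep sm (cga_basis m) (cga_br m) \<rho>"
    and irr: "irreducible_mod sm (cga_basis m) \<rho>"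
    and qw: "quasi_whittaker sm (cga_basis m) (cga_p m) \<rho> \<phi>"
  shows "bland sm (cga_basis m) (cga_p m) \<rho> \<phi>"
proof -
  interpret W: wsetup3 sm "cga_basis m" "cga_p m" "{cE, cH, cF}" "cga_br m" \<rho> \<phi> cE cH cF
    by (rule cga_setup[OF rep])
  have RE: "W.row (cP j) cE = - of_nat j * \<phi> (cP (j - 1))" if "j \<le> m" for j
    using rowE[OF that] by (simp add: W.row_def)
  have RH: "W.row (cP j) cH = (2 * of_nat j - of_nat m) * \<phi> (cP j)" if "j \<le> m" for j
    using rowH[OF that] by (simp add: W.row_def)
  have RF: "W.row (cP j) cF = (if Suc j \<le> m then (of_nat j - of_nat m) * \<phi> (cP (Suc j)) else 0)" for j
    using rowF by (simp add: W.row_def)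
  have inP: "cP j \<in> cga_p m" if "j \<le> m" for j using that by (simp add: cga_p_def)
  have ex: "\<exists>k. k \<le> m \<and> \<phi> (cP k) \<noteq> 0" using nz unfolding nonzero_on_def cga_p_def by auto
  define b where "b = (LEAST k. k \<le> m \<and> \<phi> (cP k) \<noteq> 0)"
  have b: "b \<le> m" "\<phi> (cP b) \<noteq> 0" using LeastI_ex[OF ex] unfolding b_def by auto
  have low: "\<phi> (cP k) = 0" if "k < b" for k
    using not_less_Least[of k "\<lambda>k. k \<le> m \<and> \<phi> (cP k) \<noteq> 0"] that b(1) unfolding b_def by auto
  consider "b = 0" | "0 < b" "b < m" | "b = m" "0 < b" using b(1) by linarith
  then show ?thesis
  proof cases
    case 1
    have "W.crossv (W.row (cP 0)) (W.row (cP 1)) cF \<noteq> 0"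
      unfolding W.crossv_def using m b 1 by (simp add: RE RH)
    then show ?thesis using W.bland_main[OF irr qw inP[of 0] inP[of 1]] m by auto
  next
    case 2
    have r1E: "W.row (cP (b - 1)) cE = 0"
    proof (cases "b = 1")
      case True then show ?thesis using 2 by (simp add: RE)
    next
      case False then show ?thesis using 2 low[of "b - 1 - 1"] by (simp add: RE)
    qed
    have r1F: "W.row (cP (b - 1)) cF = (of_nat (b - 1) - of_nat m) * \<phi> (cP b)"
      using 2 by (simp add: RF)
    have r2E: "W.row (cP (b + 1)) cE = - of_nat (b + 1) * \<phi> (cP b)"
      using 2 by (simp add: RE)
    have ne: "(of_nat (b - 1) - of_nat m :: complex) \<noteq> 0"
      by (simp only: right_minus_eq of_nat_eq_iff) (use 2 in linarith)
    have "W.crossv (W.row (cP (b - 1))) (W.row (cP (b + 1))) cH = W.row (cP (b - 1)) cF * W.row (cP (b + 1)) cE - W.row (cP (b - 1)) cE * W.row (cP (b + 1)) cF"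
      unfolding W.crossv_def by (simp only: W.mk_simps)
    also have "\<dots> = ((of_nat (b - 1) - of_nat m) * \<phi> (cP b)) * (- of_nat (b + 1) * \<phi> (cP b))"
      by (simp only: r1E r1F r2E mult_zero_left diff_zero)
    finally have "W.crossv (W.row (cP (b - 1))) (W.row (cP (b + 1))) cH \<noteq> 0"
      using ne b by (simp del: of_nat_add of_nat_Suc)
    then show ?thesis using W.bland_main[OF irr qw inP[of "b - 1"] inP[of "b + 1"]] 2 by auto
  next
    case 3
    have r1H: "W.row (cP (m - 1)) cH = 0" using 3 low[of "m - 1"] by (simp add: RH)
    have r1F: "W.row (cP (m - 1)) cF = - \<phi> (cP m)" using 3 by (simp add: RF of_nat_diff)
    have r2F: "W.row (cP m) cF = 0" by (simp add: RF)
    have r2H: "W.row (cP m) cH = of_nat m * \<phi> (cP m)" by (simp add: RH)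
    have "W.crossv (W.row (cP (m - 1))) (W.row (cP m)) cE = W.row (cP (m - 1)) cH * W.row (cP m) cF - W.row (cP (m - 1)) cF * W.row (cP m) cH"
      unfolding W.crossv_def by (simp only: W.mk_simps)
    also have "\<dots> = - (- \<phi> (cP m) * (of_nat m * \<phi> (cP m)))"
      by (simp only: r1H r1F r2F r2H mult_zero_left diff_0)
    finally have "W.crossv (W.row (cP (m - 1))) (W.row (cP m)) cE \<noteq> 0"
      using b 3 by simp
    then show ?thesis using W.bland_main[OF irr qw inP[of "m - 1"] inP[of m]] 3 by auto
  qed
qed


lemma sch_setup:
  assumes "is_rep sm (sch_basis n) sch_br \<rho>"
  shows "wsetup3 sm (sch_basis n) (sch_p n) {sE, sH, sF} sch_br \<rho> sE sH sF"
proof (rule mk_wsetup3[OF assms])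
  show "finite (sch_basis n)" by (simp add: sch_basis_def)
  show "sch_basis n = {sE, sH, sF} \<union> sch_p n" by (auto simp: sch_basis_def sch_p_def)
  show "{sE, sH, sF} \<inter> sch_p n = {}" by (auto simp: sch_p_def)
  show "\<forall>a\<in>sch_basis n. \<forall>b\<in>sch_p n. \<forall>c\<in>{sE, sH, sF}. sch_br a b c = 0 \<and> sch_br b a c = 0"
    by (auto simp: sch_basis_def sch_p_def sc_def)
  show "\<forall>a\<in>{sE, sH, sF}. \<forall>b\<in>{sE, sH, sF}. \<forall>c\<in>sch_p n. sch_br a b c = 0"
    by (auto simp: sch_p_def sc_def)
qed auto

lemma fin_sch_p: "finite (sch_p n)" by (simp add: sch_p_def)

lemma sch_part:
  assumes n: "n \<ge> 1" and hom: "lie_hom_on_p (sch_p n) sch_br \<phi>" and nz: "nonzero_on (sch_p n) \<phi>"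
    and rep: "is_rep sm (sch_basis n) sch_br \<rho>"
    and irr: "irreducible_mod sm (sch_basis n) \<rho>"
    and qw: "quasi_whittaker sm (sch_basis n) (sch_p n) \<rho> \<phi>"
  shows "bland sm (sch_basis n) (sch_p n) \<rho> \<phi>"
proof -
  interpret W: wsetup3 sm "sch_basis n" "sch_p n" "{sE, sH, sF}" sch_br \<rho> \<phi> sE sH sF
    by (rule sch_setup[OF rep])
  have inX: "sX i \<in> sch_p n" "sY i \<in> sch_p n" if "i \<in> {1..n}" for i
    using that by (auto simp: sch_p_def)
  have "(\<Sum>c\<in>sch_p n. sch_br (sX 1) (sY 1) c * \<phi> c) = 0"
  proof -
    have "sX 1 \<in> sch_p n" "sY 1 \<in> sch_p n" using inX[of 1] n by auto
    then show ?thesis using hom unfolding lie_hom_on_p_def by blast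
  qed
  then have z: "\<phi> sZ = 0" by (simp add: sum_sc fin_sch_p) (simp add: sch_p_def)
  obtain i where i: "i \<in> {1..n}" and ab: "\<phi> (sX i) \<noteq> 0 \<or> \<phi> (sY i) \<noteq> 0"
    using nz z unfolding nonzero_on_def sch_p_def by auto
  have XE: "W.row (sX i) sE = 0" by (simp add: W.row_def)
  have XH: "W.row (sX i) sH = - \<phi> (sX i)" using inX[OF i] by (simp add: W.row_def sum_sc fin_sch_p)
  have XF: "W.row (sX i) sF = - \<phi> (sY i)" using inX[OF i] by (simp add: W.row_def sum_sc fin_sch_p)
  have YE: "W.row (sY i) sE = - \<phi> (sX i)" using inX[OF i] by (simp add: W.row_def sum_sc fin_sch_p)
  have YH: "W.row (sY i) sH = \<phi> (sY i)" using inX[OF i] by (simp add: W.row_def sum_sc fin_sch_p)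
  have YF: "W.row (sY i) sF = 0" by (simp add: W.row_def)
  have c1: "W.crossv (W.row (sX i)) (W.row (sY i)) sE = W.row (sX i) sH * W.row (sY i) sF - W.row (sX i) sF * W.row (sY i) sH"
    unfolding W.crossv_def by (simp only: W.mk_simps)
  have c3: "W.crossv (W.row (sX i)) (W.row (sY i)) sF = W.row (sX i) sE * W.row (sY i) sH - W.row (sX i) sH * W.row (sY i) sE"
    unfolding W.crossv_def by (simp only: W.mk_simps)
  have "\<exists>b\<in>{sE, sH, sF}. W.crossv (W.row (sX i)) (W.row (sY i)) b \<noteq> 0"
    using ab c1 c3 by (auto simp: XE XH XF YE YH YF)
  then show ?thesis using W.bland_main[OF irr qw inX(1)[OF i] inX(2)[OF i]] by blast
qed


theorem theorem4p1:
  shows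
  "(\<forall>(m::nat) (sm :: complex \<Rightarrow> 'v::ab_group_add \<Rightarrow> 'v) (\<rho> :: cga \<Rightarrow> 'v \<Rightarrow> 'v) (\<phi> :: cga \<Rightarrow> complex).
      m \<ge> 1 \<and> lie_hom_on_p (cga_p m) (cga_br m) \<phi> \<and> nonzero_on (cga_p m) \<phi> \<and>
      is_rep sm (cga_basis m) (cga_br m) \<rho> \<and>
      irreducible_mod sm (cga_basis m) \<rho> \<and>
      quasi_whittaker sm (cga_basis m) (cga_p m) \<rho> \<phi>
      \<longrightarrow> bland sm (cga_basis m) (cga_p m) \<rho> \<phi>)
   \<and>
   (\<forall>(n::nat) (sm :: complex \<Rightarrow> 'w::ab_group_add \<Rightarrow> 'w) (\<rho> :: sch \<Rightarrow> 'w \<Rightarrow> 'w) (\<phi> :: sch \<Rightarrow> complex).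
      n \<ge> 1 \<and> lie_hom_on_p (sch_p n) sch_br \<phi> \<and> nonzero_on (sch_p n) \<phi> \<and>
      is_rep sm (sch_basis n) sch_br \<rho> \<and>
      irreducible_mod sm (sch_basis n) \<rho> \<and>
      quasi_whittaker sm (sch_basis n) (sch_p n) \<rho> \<phi>
      \<longrightarrow> bland sm (sch_basis n) (sch_p n) \<rho> \<phi>)"
  using cga_part sch_part by blast

end
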